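(* Let $G$, $k\ge 3$, the choice strings $c_{i,j}$, $L=k+1$ and $d=k-2$ be as in the construction in the context, and let $s$ be a string of length $L$ such that every choice string $c_{i,j}$ ($1\le i<j\le k$) has a substring of length $L$ at Hamming distance at most $d$ from $s$. Then the first $k$ characters of $s$ are encoding symbols $\sigma_{h_1},\dots,\sigma_{h_k}$, and the vertices $v_{h_1},\dots,v_{h_k}$ are $k$ vertices forming a clique in $G$.
   Context: Let $G=(V,E)$ be an undirected simple graph with $V=\{v_1,\dots,v_n\}$ and edge set $E=\{e_1,\dots,e_m\}$, and let $k\ge 3$ be an integer; put $N=\binom{k}{2}$. The alphabet consists of pairwise distinct symbols: encoding symbols $\sigma_1,\dots,\sigma_n$, string identification symbols $\varphi_1,\dots,\varphi_N$, and a synchronizing symbol $\#$. Order the pairs $(i,j)$ with $1\le i<j\le k$ lexicographically, $(1,2),(1,3),\dots,(1,k),(2,3),\dots,(k-1,k)$, and let $i'$ denote the position of $(i,j)$ in this order. For an edge $e$ joining $v_r$ and $v_s$ with $r<s$ define $\mathrm{block}(i,j,e)=\varphi_{i'}^{\,i-1}\,\sigma_r\,\varphi_{i'}^{\,j-i-1}\,\sigma_s\,\varphi_{i'}^{\,k-j}\,\#$ (a string of length $k+1$), and the choice string $c_{i,j}=\mathrm{block}(i,j,e_1)\,\varphi_{i'}^{\,k}\,\mathrm{block}(i,j,e_2)\,\varphi_{i'}^{\,k}\cdots\varphi_{i'}^{\,k}\,\mathrm{block}(i,j,e_m)$. Set $L=k+1$ and $d=k-2$. *)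

theory Defs
  imports Main
begin

text \<open>Alphabet: encoding symbols sigma_r, identification symbols phi_i, and the
  synchronizing symbol #. The datatype makes all symbols pairwise distinct.\<close>
datatype sym = Enc nat | Ident nat | Sync

text \<open>Position (1-based) of the pair (i,j) in the lexicographic order of the pairs
  (a,b) with 1 \<le> a < b \<le> k.\<close>
definition pair_index :: "nat \<Rightarrow> nat \<Rightarrow> nat \<Rightarrow> nat" where
  "pair_index k i j =
     card {(a, b). 1 \<le> a \<and> a < b \<and> b \<le> k \<and> (a < i \<or> (a = i \<and> b \<le> j))}"

text \<open>An edge joining v_r and v_s with r < s is represented by the pair (r, s).\<close>
definition block :: "nat \<Rightarrow> nat \<Rightarrow> nat \<Rightarrow> nat \<times> nat \<Rightarrow> sym list" where
  "block k i j e =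
     (let p = Ident (pair_index k i j); r = fst e; s = snd e in
      replicate (i - 1) p @ [Enc r] @ replicate (j - i - 1) p @ [Enc s]
      @ replicate (k - j) p @ [Sync])"

fun join_with :: "'a list \<Rightarrow> 'a list list \<Rightarrow> 'a list" where
  "join_with sep [] = []"
| "join_with sep [x] = x"
| "join_with sep (x # y # zs) = x @ sep @ join_with sep (y # zs)"

definition choice_string :: "nat \<Rightarrow> (nat \<times> nat) list \<Rightarrow> nat \<Rightarrow> nat \<Rightarrow> sym list" where
  "choice_string k es i j =
     join_with (replicate k (Ident (pair_index k i j))) (map (block k i j) es)"

definition hamming :: "'a list \<Rightarrow> 'a list \<Rightarrow> nat" where
  "hamming xs ys = card {t. t < length xs \<and> t < length ys \<and> xs ! t \<noteq> ys ! t}"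

definition is_substring :: "'a list \<Rightarrow> 'a list \<Rightarrow> bool" where
  "is_substring t c \<longleftrightarrow> (\<exists>u w. c = u @ t @ w)"

definition adjacent :: "(nat \<times> nat) list \<Rightarrow> nat \<Rightarrow> nat \<Rightarrow> bool" where
  "adjacent es a b \<longleftrightarrow> (min a b, max a b) \<in> set es"

end

theory Submission
  imports Defs
begin


lemma block_len: "1 \<le> i \<Longrightarrow> i < j \<Longrightarrow> j \<le> k \<Longrightarrow> length (block k i j e) = k+1"
  by (simp add: block_def Let_def)

lemma nth3: "length X = a \<Longrightarrow> length Y = b \<Longrightarrow>
  (X@Y@Z)!y = (if y < a then X!y else if y < a+b then Y!(y-a) else Z!(y-a-b))"
  by (auto simp add: nth_append)

lemma block_nth: "1 \<le> i \<Longrightarrow> i < j \<Longrightarrow> j \<le> k \<Longrightarrow> y \<le> k \<Longrightarrow>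
  block k i j e ! y = (if y = i-1 then Enc (fst e) else if y = j-1 then Enc (snd e)
     else if y = k then Sync else Ident (pair_index k i j))"
proof -
  assume a: "1 \<le> i" "i < j" "j \<le> k" "y \<le> k"
  define p where "p = Ident (pair_index k i j)"
  have b: "block k i j e = (replicate (i - 1) p @ [Enc (fst e)]) @ (replicate (j - i - 1) p @ [Enc (snd e)])
      @ (replicate (k - j) p @ [Sync])" by (simp add: block_def Let_def p_def)
  have l1: "length (replicate (i - 1) p @ [Enc (fst e)]) = i" using a by simp
  have l2: "length (replicate (j - i - 1) p @ [Enc (snd e)]) = j - i" using a by simp
  have L1: "(replicate (i - 1) p @ [Enc (fst e)]) ! z = (if z = i - 1 then Enc (fst e) else p)" if "z < i" for z
    using that by (auto simp add: nth_append)
  have L2: "(replicate (j - i - 1) p @ [Enc (snd e)]) ! z = (if z = j - i - 1 then Enc (snd e) else p)" if "z < j - i" for z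
    using that by (auto simp add: nth_append)
  have L3: "(replicate (k - j) p @ [Sync]) ! z = (if z = k - j then Sync else p)" if "z < k - j + 1" for z
    using that by (auto simp add: nth_append)
  have bl: "block k i j e ! y = (if y < i then (replicate (i - 1) p @ [Enc (fst e)]) ! y
     else if y < i + (j - i) then (replicate (j - i - 1) p @ [Enc (snd e)]) ! (y - i)
     else (replicate (k - j) p @ [Sync]) ! (y - i - (j - i)))"
    unfolding b using nth3[OF l1 l2] by blast
  have e1: "(y < i + (j - i)) = (y < j)" "y - i - (j - i) = y - j" using a by auto
  show ?thesis
  proof (cases "y < i")
    case True
    then show ?thesis unfolding bl e1 p_def[symmetric] using a L1[of y] by auto
  next
    case False
    then have y1: "\<not> y < i" .
    show ?thesis
    proof (cases "y < j")
      case True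
      then show ?thesis unfolding bl e1 p_def[symmetric] using a y1 L2[of "y - i"] by auto
    next
      case False
      then show ?thesis unfolding bl e1 p_def[symmetric] using a y1 L3[of "y - j"] by auto
    qed
  qed
qed



lemma join_len: "xs \<noteq> [] \<Longrightarrow> \<forall>x\<in>set xs. length x = L \<Longrightarrow> length sep = K \<Longrightarrow>
   length (join_with sep xs) + K = length xs * (L+K)"
proof (induction sep xs rule: join_with.induct)
  case (3 sep x y zs)
  then have "length (join_with sep (y # zs)) + K = length (y#zs) * (L+K)" by simp
  moreover have "length x = L" using 3 by simp
  ultimately show ?case using 3(4) by simp
qed auto

lemma join_nth: "\<forall>x\<in>set xs. length x = L \<Longrightarrow> length sep = K \<Longrightarrow> 0 < L \<Longrightarrow>
   p < length (join_with sep xs) \<Longrightarrow>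
   join_with sep xs ! p = (if p mod (L+K) < L then xs ! (p div (L+K)) ! (p mod (L+K)) else sep ! (p mod (L+K) - L))"
proof (induction sep xs arbitrary: p rule: join_with.induct)
  case (1 sep)
  then show ?case by simp
next
  case (2 sep x)
  then show ?case by simp
next
  case (3 sep x y zs)
  show ?case
  proof (cases "p < L + K")
    case True
    then have m: "p mod (L+K) = p" "p div (L+K) = 0" by auto
    have lx: "length x = L" using 3(2) by simp
    show ?thesis unfolding m using True lx 3(3) by (auto simp add: nth_append)
  next
    case False
    define p' where "p' = p - (L+K)"
    have pp: "p = p' + (L+K)" using False p'_def by simp
    have l: "p' < length (join_with sep (y # zs))" using 3(2-5) pp by simp
    have IH: "join_with sep (y#zs) ! p' = (if p' mod (L+K) < L then (y#zs) ! (p' div (L+K)) ! (p' mod (L+K)) else sep ! (p' mod (L+K) - L))"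
      using 3 l by simp
    have m: "p mod (L+K) = p' mod (L+K)" using pp by simp
    have d: "p div (L+K) = Suc (p' div (L+K))" using pp 3(4) div_add_self2[of "L+K" p'] by simp
    have "join_with sep (x # y # zs) ! p = join_with sep (y#zs) ! p'"
      using pp 3(2,3) by (simp add: nth_append)
    then show ?thesis using IH m d by simp
  qed
qed




definition isEnc :: "sym \<Rightarrow> bool" where "isEnc c \<longleftrightarrow> (\<exists>r. c = Enc r)"
definition isId :: "sym \<Rightarrow> bool" where "isId c \<longleftrightarrow> (\<exists>r. c = Ident r)"

lemma choice_nth:
  assumes v: "1 \<le> i" "i < j" "j \<le> k" and A: "A < length (choice_string k es i j)"
  shows "A div (2*k+1) < length es \<and> choice_string k es i j ! A =
     (if A mod (2*k+1) \<le> k then block k i j (es ! (A div (2*k+1))) ! (A mod (2*k+1))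
      else Ident (pair_index k i j))"
proof -
  let ?xs = "map (block k i j) es"
  let ?sep = "replicate k (Ident (pair_index k i j))"
  have c: "choice_string k es i j = join_with ?sep ?xs" by (simp add: choice_string_def)
  have lx: "\<forall>x\<in>set ?xs. length x = k+1" using block_len v by auto
  have ne: "es \<noteq> []" using A by (auto simp: choice_string_def)
  have len: "length (join_with ?sep ?xs) + k = length ?xs * (k+1+k)"
    using join_len[OF _ lx, of ?sep k] ne by simp
  have W: "k + 1 + k = 2*k+1" by simp
  have "A < length (join_with ?sep ?xs)" using A c by simp
  moreover have "length (join_with ?sep ?xs) \<le> length es * (k+1+k)" using len by simp
  ultimately have "A < length es * (k+1+k)" by linarith
  then have "A < length es * (2*k+1)" unfolding W .
  then have b: "A div (2*k+1) < length es" by (simp add: less_mult_imp_div_less)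
  have n: "join_with ?sep ?xs ! A = (if A mod (k+1+k) < k+1 then ?xs ! (A div (k+1+k)) ! (A mod (k+1+k))
      else ?sep ! (A mod (k+1+k) - (k+1)))"
    using join_nth[OF lx, of ?sep k A] A c by simp
  have m: "A mod (2*k+1) < 2*k+1" by simp
  show ?thesis
  proof (cases "A mod (2*k+1) \<le> k")
    case True
    then show ?thesis using n b unfolding c W by simp
  next
    case False
    then have "A mod (2*k+1) - (k+1) < k" using m by linarith
    then show ?thesis using n b False unfolding c W by simp
  qed
qed

lemma chr:
  assumes v: "1 \<le> i" "i < j" "j \<le> k" and A: "A < length (choice_string k es i j)"
  shows "choice_string k es i j ! A = Ident (pair_index k i j)
    \<or> (A mod (2*k+1) = k \<and> choice_string k es i j ! A = Sync)
    \<or> (A mod (2*k+1) = i - 1 \<and> isEnc (choice_string k es i j ! A))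
    \<or> (A mod (2*k+1) = j - 1 \<and> isEnc (choice_string k es i j ! A))"
proof -
  note cn = choice_nth[OF v A]
  show ?thesis
  proof (cases "A mod (2*k+1) \<le> k")
    case True
    then show ?thesis using cn block_nth[OF v True] by (auto simp: isEnc_def)
  next
    case False
    then show ?thesis using cn by simp
  qed
qed

lemma mod2: fixes o0 p W :: nat assumes "o0 < W" "p < W"
  shows "(o0 + p) mod W = (if o0 + p < W then o0 + p else o0 + p - W)"
proof (cases "o0 + p < W")
  case True then show ?thesis by simp
next
  case False
  then have "(o0 + p) mod W = (o0 + p - W) mod W" by (simp add: le_mod_geq)
  also have "\<dots> = o0 + p - W" using assms by simp
  finally show ?thesis using False by simp
qed

lemma ar: fixes o0 p k c :: nat assumes "o0 < 2*k+1" "p \<le> k" "(o0 + p) mod (2*k+1) = c" "c \<le> k"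
  shows "p + k = (if o0 \<le> k then k - o0 else 3*k+1-o0) + c"
proof -
  have "(o0 + p) mod (2*k+1) = (if o0 + p < 2*k+1 then o0 + p else o0 + p - (2*k+1))"
    using mod2[of o0 "2*k+1" p] assms by simp
  then show ?thesis using assms by (auto split: if_splits)
qed

lemma sub_nth: assumes "c = u @ t @ w" "p < length t"
  shows "t ! p = c ! (length u + p) \<and> length u + p < length c"
  using assms by (simp add: nth_append)




lemma window_struct:
  assumes v: "1 \<le> i" "i < j" "j \<le> k" and lt: "length t = k + 1"
    and sb: "is_substring t (choice_string k es i j)"
  shows "\<exists>q. \<forall>p\<le>k. t!p = Ident (pair_index k i j) \<or> (p = q \<and> t!p = Sync)
     \<or> (p+k+1 = q+i \<and> isEnc (t!p)) \<or> (p+k+1 = q+j \<and> isEnc (t!p))"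
proof -
  obtain u w where cw: "choice_string k es i j = u @ t @ w" using sb unfolding is_substring_def by blast
  define o0 where "o0 = length u mod (2*k+1)"
  define q where "q = (if o0 \<le> k then k - o0 else 3*k+1-o0)"
  have o0l: "o0 < 2*k+1" unfolding o0_def by simp
  have "\<forall>p\<le>k. t!p = Ident (pair_index k i j) \<or> (p = q \<and> t!p = Sync)
     \<or> (p+k+1 = q+i \<and> isEnc (t!p)) \<or> (p+k+1 = q+j \<and> isEnc (t!p))"
  proof (intro allI impI)
    fix p assume pk: "p \<le> k"
    have sn: "t ! p = choice_string k es i j ! (length u + p) \<and> length u + p < length (choice_string k es i j)"
      using sub_nth[OF cw] pk lt by simp
    have mm: "(length u + p) mod (2*k+1) = (o0 + p) mod (2*k+1)" unfolding o0_def by (simp add: mod_add_left_eq)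
    have arc: "\<And>c. (length u + p) mod (2*k+1) = c \<Longrightarrow> c \<le> k \<Longrightarrow> p + k = q + c"
      using ar[OF o0l pk] mm unfolding q_def by metis
    show "t!p = Ident (pair_index k i j) \<or> (p = q \<and> t!p = Sync)
     \<or> (p+k+1 = q+i \<and> isEnc (t!p)) \<or> (p+k+1 = q+j \<and> isEnc (t!p))"
    proof -
      let ?c = "choice_string k es i j ! (length u + p)"
      have tp: "t ! p = ?c" using sn by simp
      from chr[OF v sn[THEN conjunct2]]
      consider (a) "?c = Ident (pair_index k i j)"
        | (b) "(length u + p) mod (2*k+1) = k \<and> ?c = Sync"
        | (c) "(length u + p) mod (2*k+1) = i - 1 \<and> isEnc ?c"
        | (d) "(length u + p) mod (2*k+1) = j - 1 \<and> isEnc ?c" by blast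
      then show ?thesis
      proof cases
        case a then show ?thesis using tp by simp
      next
        case b
        then have "p + k = q + k" using arc[of k] by simp
        then show ?thesis using b tp by simp
      next
        case c
        then have "p + k = q + (i - 1)" using arc[of "i-1"] v by simp
        then have "p + k + 1 = q + i" using v by simp
        then show ?thesis using c tp by simp
      next
        case d
        then have "p + k = q + (j - 1)" using arc[of "j-1"] v by simp
        then have "p + k + 1 = q + j" using v by simp
        then show ?thesis using d tp by simp
      qed
    qed
  qed
  then show ?thesis by blast
qed




lemma mdW: fixes W b p :: nat assumes "p < W"
  shows "(b * W + p) mod W = p" "(b * W + p) div W = b"
proof -
  have W0: "W \<noteq> 0" using assms by simp
  have "(b * W + p) mod W = (p + b * W) mod W" by (simp add: add.commute)
  also have "\<dots> = p mod W" by (rule mod_mult_self1)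
  finally show "(b * W + p) mod W = p" using assms by simp
  have "(b * W + p) div W = (p + b * W) div W" by (simp add: add.commute)
  also have "\<dots> = b + p div W" using W0 by (rule div_mult_self1)
  finally show "(b * W + p) div W = b" using assms by simp
qed

lemma window_sync:
  assumes v: "1 \<le> i" "i < j" "j \<le> k" and lt: "length t = k + 1"
    and sb: "is_substring t (choice_string k es i j)" and ts: "t ! k = Sync"
  shows "\<exists>e\<in>set es. t = block k i j e"
proof -
  obtain u w where cw: "choice_string k es i j = u @ t @ w" using sb unfolding is_substring_def by blast
  define o0 where "o0 = length u mod (2*k+1)"
  have o0l: "o0 < 2*k+1" unfolding o0_def by simp
  have sn: "t ! k = choice_string k es i j ! (length u + k) \<and> length u + k < length (choice_string k es i j)"
    using sub_nth[OF cw] lt by simp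
  have "(length u + k) mod (2*k+1) = k"
    using chr[OF v sn[THEN conjunct2]] sn ts by (auto simp: isEnc_def)
  then have "(o0 + k) mod (2*k+1) = k" unfolding o0_def by (simp add: mod_add_left_eq)
  then have "k + k = (if o0 \<le> k then k - o0 else 3*k+1-o0) + k" using ar[OF o0l, of k k] by simp
  then have o00: "o0 = 0"
  proof (cases "o0 \<le> k")
    case True
    then show ?thesis using \<open>k + k = _\<close> by simp
  next
    case False
    then show ?thesis using \<open>k + k = _\<close> o0l by simp
  qed
  define b where "b = length u div (2*k+1)"
  have ub: "length u = b * (2*k+1)" using o00 unfolding o0_def b_def using div_mult_mod_eq[of "length u" "2*k+1"] by simp
  have tp: "t ! p = block k i j (es ! b) ! p \<and> b < length es" if pk: "p \<le> k" for p
  proof -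
    have sn: "t ! p = choice_string k es i j ! (length u + p) \<and> length u + p < length (choice_string k es i j)"
      using sub_nth[OF cw] pk lt by simp
    have p2: "p < 2*k+1" using pk by simp
    have md: "(length u + p) mod (2*k+1) = p" "(length u + p) div (2*k+1) = b" unfolding ub using mdW[OF p2] by blast+
    show ?thesis using choice_nth[OF v sn[THEN conjunct2]] sn pk unfolding md by simp
  qed
  have "t = block k i j (es ! b)"
    by (rule nth_equalityI) (use lt block_len[OF v] tp in auto)
  then show ?thesis using tp[of 0] by auto
qed




lemma DL:
  fixes s t :: "sym list"
  assumes v: "1 \<le> i" "i < j" "j \<le> k"
    and st: "\<exists>q. \<forall>p\<le>k. t!p = Ident x \<or> (p = q \<and> t!p = Sync)
     \<or> (p+k+1 = q+i \<and> isEnc (t!p)) \<or> (p+k+1 = q+j \<and> isEnc (t!p))"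
    and c3: "card {p. p \<le> k \<and> s!p = t!p} \<ge> 3"
    and nph: "\<forall>p\<le>k. s!p \<noteq> Ident x"
  shows "\<exists>q\<le>k. k+1 \<le> q+i \<and> s!q = Sync \<and> t!q = Sync
     \<and> isEnc (s!(q+i-(k+1))) \<and> s!(q+i-(k+1)) = t!(q+i-(k+1))
     \<and> isEnc (s!(q+j-(k+1))) \<and> s!(q+j-(k+1)) = t!(q+j-(k+1))"
proof -
  obtain q where q: "\<forall>p\<le>k. t!p = Ident x \<or> (p = q \<and> t!p = Sync)
     \<or> (p+k+1 = q+i \<and> isEnc (t!p)) \<or> (p+k+1 = q+j \<and> isEnc (t!p))" using st by blast
  define M where "M = {p. p \<le> k \<and> s!p = t!p}"
  have Msub: "M \<subseteq> {p. p\<le>k \<and> (p = q \<or> p+k+1 = q+i \<or> p+k+1 = q+j)}"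
    using q nph unfolding M_def by fastforce
  have c3': "card M \<ge> 3" using c3 unfolding M_def .
  have two: "card M \<le> 2" if "M \<subseteq> {a, b}" for a b
  proof -
    have "card {a, b} \<le> 2" by (cases "a = b") auto
    moreover have "card M \<le> card {a, b}" using card_mono[OF _ that] by simp
    ultimately show ?thesis by linarith
  qed
  have qk: "q \<le> k"
  proof (rule ccontr)
    assume "\<not> q \<le> k"
    then have "M \<subseteq> {q+i-(k+1), q+j-(k+1)}" using Msub by auto
    then have "card M \<le> 2" by (rule two)
    then show False using c3' by linarith
  qed
  have qi: "k+1 \<le> q+i"
  proof (rule ccontr)
    assume "\<not> k+1 \<le> q+i"
    then have "M \<subseteq> {q, q+j-(k+1)}" using Msub by auto
    then have "card M \<le> 2" by (rule two)
    then show False using c3' by linarith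
  qed
  have M3: "M \<subseteq> {q, q+i-(k+1), q+j-(k+1)}" using Msub by auto
  have inM: "q \<in> M" "q+i-(k+1) \<in> M" "q+j-(k+1) \<in> M"
  proof -
    show "q \<in> M"
    proof (rule ccontr)
      assume "q \<notin> M" then have "M \<subseteq> {q+i-(k+1), q+j-(k+1)}" using M3 by auto
      then have "card M \<le> 2" by (rule two)
    then show False using c3' by linarith
    qed
    show "q+i-(k+1) \<in> M"
    proof (rule ccontr)
      assume "q+i-(k+1) \<notin> M" then have "M \<subseteq> {q, q+j-(k+1)}" using M3 by auto
      then have "card M \<le> 2" by (rule two)
    then show False using c3' by linarith
    qed
    show "q+j-(k+1) \<in> M"
    proof (rule ccontr)
      assume "q+j-(k+1) \<notin> M" then have "M \<subseteq> {q, q+i-(k+1)}" using M3 by auto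
      then have "card M \<le> 2" by (rule two)
    then show False using c3' by linarith
    qed
  qed
  have a: "t!q = Sync" using q[rule_format, OF qk] inM(1) nph qk v unfolding M_def by auto
  have b: "isEnc (t!(q+i-(k+1)))" using q[rule_format, of "q+i-(k+1)"] inM(2) nph qi v unfolding M_def by auto
  have c: "isEnc (t!(q+j-(k+1)))" using q[rule_format, of "q+j-(k+1)"] inM(3) nph qi v unfolding M_def by auto
  have e2: "s!(q+i-(k+1)) = t!(q+i-(k+1))" "s!(q+j-(k+1)) = t!(q+j-(k+1))" "s!q = t!q"
    using inM unfolding M_def by auto
  show ?thesis apply (rule exI[of _ q]) using a b c e2 qk qi by simp
qed




definition pset :: "nat \<Rightarrow> nat \<Rightarrow> nat \<Rightarrow> (nat \<times> nat) set" where
  "pset k i j = {(a, b). 1 \<le> a \<and> a < b \<and> b \<le> k \<and> (a < i \<or> (a = i \<and> b \<le> j))}"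

lemma pidx_lt:
  assumes "1 \<le> i'" "i' < j'" "j' \<le> k" "i < i' \<or> (i = i' \<and> j < j')"
  shows "pair_index k i j < pair_index k i' j'"
proof -
  have f: "finite (pset k i' j')" unfolding pset_def
    by (rule finite_subset[of _ "{..k} \<times> {..k}"]) auto
  have s1: "pset k i j \<subseteq> pset k i' j'" unfolding pset_def using assms by auto
  have s2: "(i', j') \<in> pset k i' j'" "(i', j') \<notin> pset k i j" unfolding pset_def using assms by auto
  have "pset k i j \<subset> pset k i' j'" using s1 s2 by blast
  then have "card (pset k i j) < card (pset k i' j')" using f psubset_card_mono by blast
  then show ?thesis unfolding pair_index_def pset_def by simp
qed

lemma pidx_inj:
  assumes "1 \<le> i" "i < j" "j \<le> k" "1 \<le> i'" "i' < j'" "j' \<le> k"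
    "pair_index k i j = pair_index k i' j'"
  shows "i = i' \<and> j = j'"
proof (rule ccontr)
  assume "\<not> (i = i' \<and> j = j')"
  then have "(i < i' \<or> (i = i' \<and> j < j')) \<or> (i' < i \<or> (i' = i \<and> j' < j))" by auto
  then show False
  proof
    assume "i < i' \<or> (i = i' \<and> j < j')"
    then have "pair_index k i j < pair_index k i' j'" using pidx_lt[of i' j' k i j] assms(4-6) by blast
    then show False using assms(7) by simp
  next
    assume "i' < i \<or> (i' = i \<and> j' < j)"
    then have "pair_index k i' j' < pair_index k i j" using pidx_lt[of i j k i' j'] assms(1-3) by blast
    then show False using assms(7) by simp
  qed
qed





lemma disj_card:
  assumes "finite J" "finite B" "\<forall>j\<in>J. A j \<subseteq> B"
    "\<forall>j\<in>J. \<forall>j'\<in>J. j \<noteq> j' \<longrightarrow> A j \<inter> A j' = {}"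
  shows "(\<Sum>j\<in>J. card (A j)) \<le> card B"
proof -
  have fa: "\<forall>j\<in>J. finite (A j)" using assms(2,3) finite_subset by blast
  have "card (\<Union>j\<in>J. A j) = (\<Sum>j\<in>J. card (A j))"
    by (rule card_UN_disjoint) (use assms(1,4) fa in auto)
  moreover have "card (\<Union>j\<in>J. A j) \<le> card B" using assms(2,3) by (intro card_mono) auto
  ultimately show ?thesis by simp
qed

lemma disj_card1:
  assumes "finite J" "finite B" "\<forall>j\<in>J. A j \<subseteq> B"
    "\<forall>j\<in>J. \<forall>j'\<in>J. j \<noteq> j' \<longrightarrow> A j \<inter> A j' = {}" "\<forall>j\<in>J. A j \<noteq> {}"
  shows "card J \<le> card B"
proof -
  have "\<forall>j\<in>J. 1 \<le> card (A j)"
  proof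
    fix j assume "j \<in> J"
    then have "finite (A j)" "A j \<noteq> {}" using assms(2,3,5) finite_subset by blast+
    then show "1 \<le> card (A j)" by (simp add: Suc_le_eq card_gt_0_iff)
  qed
  then have "(\<Sum>j\<in>J. (1::nat)) \<le> (\<Sum>j\<in>J. card (A j))" by (intro sum_mono) auto
  then show ?thesis using disj_card[OF assms(1-4)] by simp
qed




theorem proposition2:
  fixes n k :: nat and es :: "(nat \<times> nat) list" and s :: "sym list"
  assumes edges: "\<forall>(r, q) \<in> set es. 1 \<le> r \<and> r < q \<and> q \<le> n"
    and simple: "distinct es"
    and k3: "k \<ge> 3"
    and len: "length s = k + 1"
    and close: "\<forall>i j. 1 \<le> i \<and> i < j \<and> j \<le> k \<longrightarrow>
        (\<exists>t. length t = k + 1 \<and> is_substring t (choice_string k es i j)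
              \<and> hamming s t \<le> k - 2)"
  shows "\<exists>h. (\<forall>a < k. s ! a = Enc (h a) \<and> h a \<in> {1..n})
           \<and> inj_on h {..<k}
           \<and> (\<forall>a < k. \<forall>b < k. a \<noteq> b \<longrightarrow> adjacent es (h a) (h b))"
proof -
  define T where "T i j = (SOME t. length t = k + 1 \<and> is_substring t (choice_string k es i j)
              \<and> hamming s t \<le> k - 2)" for i j
  have T: "length (T i j) = k + 1 \<and> is_substring (T i j) (choice_string k es i j)
              \<and> hamming s (T i j) \<le> k - 2" if "1 \<le> i" "i < j" "j \<le> k" for i j
  proof -
    have "\<exists>t. length t = k + 1 \<and> is_substring t (choice_string k es i j) \<and> hamming s t \<le> k - 2"
      using close that by blast
    then show ?thesis unfolding T_def by (rule someI_ex)
  qed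
  define Phi where "Phi i j = {p. p \<le> k \<and> s!p = Ident (pair_index k i j)}" for i j
  define Mt where "Mt i j = {p. p \<le> k \<and> s!p = T i j ! p}" for i j
  define IP where "IP = {p. p \<le> k \<and> isId (s!p)}"
  define NIP where "NIP = {p. p \<le> k \<and> \<not> isId (s!p)}"
  have finIP: "finite IP" "finite NIP" unfolding IP_def NIP_def by auto
  have cardsum: "card IP + card NIP = k + 1"
  proof -
    have "IP \<union> NIP = {..k}" "IP \<inter> NIP = {}" unfolding IP_def NIP_def by auto
    then show ?thesis using card_Un_disjoint[OF finIP] by simp
  qed
  have M3: "card (Mt i j) \<ge> 3" if v: "1 \<le> i" "i < j" "j \<le> k" for i j
  proof -
    let ?t = "T i j"
    have lt: "length ?t = k+1" using T[OF v] by simp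
    have h: "hamming s ?t \<le> k - 2" using T[OF v] by simp
    define X where "X = {p. p < k+1 \<and> s!p \<noteq> ?t!p}"
    have hX: "hamming s ?t = card X" unfolding hamming_def X_def using lt len by simp
    have "Mt i j \<union> X = {..<k+1}" "Mt i j \<inter> X = {}" unfolding Mt_def X_def by auto
    then have "card (Mt i j) + card X = k+1"
      using card_Un_disjoint[of "Mt i j" X] by (metis card_lessThan finite_Un finite_lessThan)
    then show ?thesis using h hX k3 by linarith
  qed
  have WS: "\<exists>q. \<forall>p\<le>k. T i j!p = Ident (pair_index k i j) \<or> (p = q \<and> T i j!p = Sync)
     \<or> (p+k+1 = q+i \<and> isEnc (T i j!p)) \<or> (p+k+1 = q+j \<and> isEnc (T i j!p))"
    if v: "1 \<le> i" "i < j" "j \<le> k" for i j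
    using window_struct[OF v] T[OF v] by blast
  have Msub: "Mt i j \<subseteq> Phi i j \<union> NIP" if v: "1 \<le> i" "i < j" "j \<le> k" for i j
  proof
    fix p assume pM: "p \<in> Mt i j"
    obtain q where q: "\<forall>p\<le>k. T i j!p = Ident (pair_index k i j) \<or> (p = q \<and> T i j!p = Sync)
     \<or> (p+k+1 = q+i \<and> isEnc (T i j!p)) \<or> (p+k+1 = q+j \<and> isEnc (T i j!p))" using WS[OF v] by blast
    have pk: "p \<le> k" and e: "s!p = T i j ! p" using pM unfolding Mt_def by auto
    show "p \<in> Phi i j \<union> NIP"
    proof (cases "isId (s!p)")
      case True
      then obtain y where y: "s!p = Ident y" unfolding isId_def by blast
      then have "T i j ! p = Ident (pair_index k i j)" using q[rule_format, OF pk] e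
        by (auto simp: isEnc_def)
      then show ?thesis using y e pk unfolding Phi_def by simp
    next
      case False
      then show ?thesis using pk unfolding NIP_def by simp
    qed
  qed
  have Mcard: "card (Mt i j) \<le> card (Phi i j) + card NIP" if v: "1 \<le> i" "i < j" "j \<le> k" for i j
  proof -
    have "finite (Phi i j)" unfolding Phi_def by simp
    then have "card (Mt i j) \<le> card (Phi i j \<union> NIP)" using Msub[OF v] finIP by (intro card_mono) auto
    also have "\<dots> \<le> card (Phi i j) + card NIP" by (rule card_Un_le)
    finally show ?thesis .
  qed
  have PhiIP: "Phi i j \<subseteq> IP" for i j unfolding Phi_def IP_def isId_def by auto
  have disj: "Phi i j \<inter> Phi i' j' = {}"
    if "1 \<le> i" "i < j" "j \<le> k" "1 \<le> i'" "i' < j'" "j' \<le> k" "(i, j) \<noteq> (i', j')" for i j i' j'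
  proof (rule ccontr)
    assume "Phi i j \<inter> Phi i' j' \<noteq> {}"
    then obtain p where "p \<in> Phi i j" "p \<in> Phi i' j'" by blast
    then have "pair_index k i j = pair_index k i' j'" unfolding Phi_def by simp
    then show False using pidx_inj[OF that(1-6)] that(7) by simp
  qed
  have DLa: "\<exists>q\<le>k. k+1 \<le> q+i \<and> s!q = Sync \<and> T i j!q = Sync
     \<and> isEnc (s!(q+i-(k+1))) \<and> s!(q+i-(k+1)) = T i j!(q+i-(k+1))
     \<and> isEnc (s!(q+j-(k+1))) \<and> s!(q+j-(k+1)) = T i j!(q+j-(k+1))"
    if v: "1 \<le> i" "i < j" "j \<le> k" and e: "Phi i j = {}" for i j
  proof (rule DL[OF v WS[OF v]])
    show "3 \<le> card {p. p \<le> k \<and> s ! p = T i j ! p}" using M3[OF v] unfolding Mt_def .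
    show "\<forall>p\<le>k. s ! p \<noteq> Ident (pair_index k i j)" using e unfolding Phi_def by auto
  qed
  have NI3: "card NIP \<ge> 3"
  proof (rule ccontr)
    assume "\<not> card NIP \<ge> 3"
    then have y2: "card NIP \<le> 2" by simp
    define A where "A j = (if j \<le> k then Phi 1 j else Phi 2 3)" for j
    have cA: "3 - card NIP \<le> card (A j)" if "j \<in> {2..k+1}" for j
    proof (cases "j \<le> k")
      case True
      then have v: "1 \<le> (1::nat)" "1 < j" "j \<le> k" using that by auto
      show ?thesis using M3[OF v] Mcard[OF v] True unfolding A_def by simp
    next
      case False
      have v: "1 \<le> (2::nat)" "2 < (3::nat)" "3 \<le> k" using k3 by auto
      show ?thesis using M3[OF v] Mcard[OF v] False unfolding A_def by simp
    qed
    have dA: "\<forall>j\<in>{2..k+1}. \<forall>j'\<in>{2..k+1}. j \<noteq> j' \<longrightarrow> A j \<inter> A j' = {}"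
    proof (intro ballI impI)
      fix j j' assume a: "j \<in> {2..k+1}" "j' \<in> {2..k+1}" "j \<noteq> j'"
      show "A j \<inter> A j' = {}"
      proof (cases "j \<le> k")
        case True
        show ?thesis
        proof (cases "j' \<le> k")
          case True
          then show ?thesis using \<open>j \<le> k\<close> a disj[of 1 j 1 j'] unfolding A_def by auto
        next
          case False
          then show ?thesis using \<open>j \<le> k\<close> a k3 disj[of 1 j 2 3] unfolding A_def by auto
        qed
      next
        case False
        then have "j' \<le> k" using a by auto
        then show ?thesis using False a k3 disj[of 2 3 1 j'] unfolding A_def by auto
      qed
    qed
    have "(\<Sum>j\<in>{2..k+1}. card (A j)) \<le> card IP"
      by (rule disj_card[OF _ finIP(1) _ dA]) (auto simp: A_def PhiIP)
    moreover have "(\<Sum>j\<in>{2..k+1}. (3 - card NIP)) \<le> (\<Sum>j\<in>{2..k+1}. card (A j))"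
      by (rule sum_mono) (rule cA)
    ultimately have "k * (3 - card NIP) \<le> k + 1 - card NIP" using cardsum by simp
    moreover have "card NIP = 0 \<or> card NIP = 1 \<or> card NIP = 2" using y2 by auto
    ultimately show False using k3 by auto
  qed
  have P1: "s!k = Sync \<and> isEnc (s!0) \<and> isEnc (s!(j-1))" if pj: "1 < j" "j \<le> k" "Phi 1 j = {}" for j
  proof -
    have v: "1 \<le> (1::nat)" "1 < j" "j \<le> k" using pj by auto
    obtain q where q: "q \<le> k" "k+1 \<le> q+1" "s!q = Sync" "isEnc (s!(q+1-(k+1)))" "isEnc (s!(q+j-(k+1)))"
      using DLa[OF v pj(3)] by blast
    then have "q = k" by simp
    then show ?thesis using q pj by simp
  qed
  have S2: "s!k = Sync \<and> isEnc (s!0)"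
  proof (rule ccontr)
    assume na: "\<not> (s!k = Sync \<and> isEnc (s!0))"
    have "card {2..k} \<le> card IP"
    proof (rule disj_card1[OF _ finIP(1), of _ "\<lambda>j. Phi 1 j"])
      show "\<forall>j\<in>{2..k}. Phi 1 j \<noteq> {}" using P1 na by force
      show "\<forall>j\<in>{2..k}. \<forall>j'\<in>{2..k}. j \<noteq> j' \<longrightarrow> Phi 1 j \<inter> Phi 1 j' = {}"
        using disj by auto
    qed (auto simp: PhiIP)
    then show False using cardsum NI3 by simp
  qed
  define Bp where "Bp = {p. p < k \<and> \<not> isEnc (s!p)}"
  have finB: "finite Bp" unfolding Bp_def by simp
  have Bp1: "0 < p \<and> p < k \<and> Phi 1 (p+1) \<noteq> {}" if "p \<in> Bp" for p
  proof -
    have p: "p < k" "\<not> isEnc (s!p)" using that unfolding Bp_def by auto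
    have "p \<noteq> 0"
    proof
      assume "p = 0" then show False using p S2 by simp
    qed
    moreover have "Phi 1 (p+1) \<noteq> {}" using P1[of "p+1"] p \<open>p \<noteq> 0\<close> by auto
    ultimately show ?thesis using p by simp
  qed
  have disjB: "\<forall>a\<in>Bp. \<forall>b\<in>Bp. a \<noteq> b \<longrightarrow> Phi 1 (a+1) \<inter> Phi 1 (b+1) = {}"
  proof (intro ballI impI)
    fix a b assume "a \<in> Bp" "b \<in> Bp" "a \<noteq> b"
    then have "0 < a" "a < k" "0 < b" "b < k" "a \<noteq> b" using Bp1 by auto
    then show "Phi 1 (a+1) \<inter> Phi 1 (b+1) = {}" using disj[of 1 "a+1" 1 "b+1"] by simp
  qed
  have cB: "card Bp \<le> card IP"
    by (rule disj_card1[OF finB finIP(1), of "\<lambda>p. Phi 1 (p+1)"]) (use PhiIP disjB Bp1 in auto)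
  have IPB: "IP \<subseteq> Bp"
  proof
    fix p assume "p \<in> IP"
    then have "p \<le> k" "isId (s!p)" unfolding IP_def by auto
    moreover then have "p \<noteq> k" using S2 by (auto simp: isId_def)
    ultimately show "p \<in> Bp" unfolding Bp_def by (auto simp: isId_def isEnc_def)
  qed
  have IPeq: "IP = Bp" using card_subset_eq[OF finB IPB] cB card_mono[OF finB IPB] by simp
  have noSync: "s!p \<noteq> Sync" if "p < k" for p
  proof
    assume "s!p = Sync"
    then have "p \<in> Bp" using that unfolding Bp_def by (auto simp: isEnc_def)
    then have "p \<in> IP" using IPeq by simp
    then show False using \<open>s!p = Sync\<close> unfolding IP_def isId_def by auto
  qed
  have B0: "Bp = {}"
  proof (rule ccontr)
    assume "Bp \<noteq> {}"
    then obtain p0 where p0: "p0 \<in> Bp" by blast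
    have p0b: "0 < p0" "p0 < k" "\<not> isEnc (s!p0)" using Bp1[OF p0] p0 unfolding Bp_def by auto
    define j0 where "j0 = (if p0 = 1 then 3 else p0 + 1)"
    have v0: "1 \<le> (2::nat)" "2 < j0" "j0 \<le> k" using p0b k3 unfolding j0_def by auto
    have p0in: "p0 = 1 \<or> p0 = j0 - 1" unfolding j0_def by auto
    have ne0: "Phi 2 j0 \<noteq> {}"
    proof
      assume "Phi 2 j0 = {}"
      then obtain q where q: "q \<le> k" "k+1 \<le> q+2" "s!q = Sync" "isEnc (s!(q+2-(k+1)))" "isEnc (s!(q+j0-(k+1)))"
        using DLa[OF v0] by blast
      have "q = k" using q(1,3) noSync by (metis le_neq_implies_less)
      then have "isEnc (s!1)" "isEnc (s!(j0-1))" using q by auto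
      then show False using p0in p0b by auto
    qed
    define A where "A p = (if p = k then Phi 2 j0 else Phi 1 (p+1))" for p
    have kB: "k \<notin> Bp" unfolding Bp_def by simp
    have "card (insert k Bp) \<le> card IP"
    proof (rule disj_card1[OF _ finIP(1), of _ A])
      show "finite (insert k Bp)" using finB by simp
      show "\<forall>j\<in>insert k Bp. A j \<subseteq> IP" unfolding A_def using PhiIP by auto
      show "\<forall>j\<in>insert k Bp. A j \<noteq> {}" unfolding A_def using ne0 Bp1 kB by auto
      show "\<forall>j\<in>insert k Bp. \<forall>j'\<in>insert k Bp. j \<noteq> j' \<longrightarrow> A j \<inter> A j' = {}"
      proof (intro ballI impI)
        fix a b assume a: "a \<in> insert k Bp" "b \<in> insert k Bp" "a \<noteq> b"
        show "A a \<inter> A b = {}"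
        proof (cases "a = k")
          case True
          then have "b \<in> Bp" using a by auto
          then show ?thesis using True Bp1[of b] kB disj[of 2 j0 1 "b+1"] v0 a unfolding A_def by auto
        next
          case False
          then have aB: "a \<in> Bp" using a by auto
          show ?thesis
          proof (cases "b = k")
            case True
            then show ?thesis using False aB Bp1[of a] kB disj[of 1 "a+1" 2 j0] v0 unfolding A_def by auto
          next
            case False
            then have "b \<in> Bp" using a by auto
            then show ?thesis using False \<open>a \<noteq> k\<close> aB disjB a(3) unfolding A_def by auto
          qed
        qed
      qed
    qed
    then show False using kB finB IPeq by simp
  qed
  have allEnc: "isEnc (s!a)" if "a < k" for a using B0 that unfolding Bp_def by auto
  have IP0: "IP = {}" using IPeq B0 by simp
  define h where "h a = (case s!a of Enc r \<Rightarrow> r | _ \<Rightarrow> 0)" for a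
  have hE: "s!a = Enc (h a)" if "a < k" for a
    using allEnc[OF that] unfolding isEnc_def h_def by auto
  have KF: "(h (i-1), h (j-1)) \<in> set es" if v: "1 \<le> i" "i < j" "j \<le> k" for i j
  proof -
    have e: "Phi i j = {}" using PhiIP[of i j] IP0 by simp
    obtain q where q: "q \<le> k" "k+1 \<le> q+i" "s!q = Sync" "T i j!q = Sync"
       "s!(q+i-(k+1)) = T i j!(q+i-(k+1))" "s!(q+j-(k+1)) = T i j!(q+j-(k+1))"
      using DLa[OF v e] by blast
    have "q = k" using q(1,3) noSync by (metis le_neq_implies_less)
    then have q': "T i j ! k = Sync" "s!(i-1) = T i j!(i-1)" "s!(j-1) = T i j!(j-1)" using q v by auto
    obtain e where e: "e \<in> set es" "T i j = block k i j e"
      using window_sync[OF v _ _ q'(1)] T[OF v] by blast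
    have b1: "T i j ! (i-1) = Enc (fst e)" using block_nth[OF v, of "i-1" e] e v by simp
    have ji: "j - 1 \<noteq> i - 1" "j - 1 \<le> k" using v by auto
    have b2: "T i j ! (j-1) = Enc (snd e)" using block_nth[OF v ji(2), of e] e ji(1) by simp
    have "h (i-1) = fst e" using hE[of "i-1"] q'(2) b1 v by simp
    moreover have "h (j-1) = snd e" using hE[of "j-1"] q'(3) b2 v by simp
    ultimately show ?thesis using e(1) by simp
  qed
  have KF2: "1 \<le> h a \<and> h a < h b \<and> h b \<le> n \<and> (h a, h b) \<in> set es" if "a < b" "b < k" for a b
  proof -
    have "(h a, h b) \<in> set es" using KF[of "a+1" "b+1"] that by simp
    then show ?thesis using edges by auto
  qed
  show ?thesis
  proof (intro exI conjI allI impI)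
    fix a assume a: "a < k"
    show "s ! a = Enc (h a)" using hE[OF a] .
    show "h a \<in> {1..n}"
    proof (cases "a = 0")
      case True
      then show ?thesis using KF2[of 0 1] k3 by auto
    next
      case False
      then show ?thesis using KF2[of 0 a] a by auto
    qed
  next
    show "inj_on h {..<k}"
    proof (rule inj_onI)
      fix a b assume "a \<in> {..<k}" "b \<in> {..<k}" "h a = h b"
      then show "a = b" using KF2[of a b] KF2[of b a] by (metis lessThan_iff less_irrefl linorder_neqE_nat)
    qed
  next
    fix a b assume ab: "a < k" "b < k" "a \<noteq> b"
    show "adjacent es (h a) (h b)"
    proof (cases "a < b")
      case True
      then show ?thesis using KF2[of a b] ab unfolding adjacent_def by (simp add: min_def max_def)
    next
      case False
      then have "b < a" using ab by simp
      then show ?thesis using KF2[of b a] ab unfolding adjacent_def by (simp add: min_def max_def)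
    qed
  qed
qed


end
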